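(* For every $v\in\overline{C}$, the set $T(v)$ is a clique in $G$.
   Context: All graphs are simple. $\mathcal{G}^*$ denotes the class of graphs in which any two distinct odd cycles share at most one edge. Standing setting: $G\in\mathcal{G}^*$ is $2$-connected, and $C$ is a longest odd cycle of $G$ with $|C|\ge 5$. We also write $C$ for its vertex set. Let $\overline{C}=V(G)\setminus C$, assumed nonempty. For $v\in\overline{C}$ and $w\in C$, $v$ touches $w$ if there is a $v,w$-path meeting $C$ only at $w$. $T(v)=\{w\in C: v \text{ touches } w\}$. *)

theory Defs
  imports Main
begin

definition simple_graph :: "'a set \<Rightarrow> ('a \<Rightarrow> 'a \<Rightarrow> bool) \<Rightarrow> bool" where
  "simple_graph V E \<longleftrightarrow> finite V \<and> (\<forall>x y. E x y \<longrightarrow> x \<in> V \<and> y \<in> V)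
     \<and> (\<forall>x y. E x y \<longrightarrow> E y x) \<and> (\<forall>x. \<not> E x x)"

definition is_walk :: "('a \<Rightarrow> 'a \<Rightarrow> bool) \<Rightarrow> 'a list \<Rightarrow> bool" where
  "is_walk E p \<longleftrightarrow> p \<noteq> [] \<and> (\<forall>i. Suc i < length p \<longrightarrow> E (p ! i) (p ! Suc i))"

definition is_path :: "('a \<Rightarrow> 'a \<Rightarrow> bool) \<Rightarrow> 'a list \<Rightarrow> bool" where
  "is_path E p \<longleftrightarrow> is_walk E p \<and> distinct p"

definition is_cycle :: "('a \<Rightarrow> 'a \<Rightarrow> bool) \<Rightarrow> 'a list \<Rightarrow> bool" where
  "is_cycle E c \<longleftrightarrow> length c \<ge> 3 \<and> is_path E c \<and> E (last c) (hd c)"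

definition cycle_edges :: "'a list \<Rightarrow> 'a set set" where
  "cycle_edges c = {{c ! i, c ! ((Suc i) mod length c)} | i. i < length c}"

definition is_odd_cycle :: "('a \<Rightarrow> 'a \<Rightarrow> bool) \<Rightarrow> 'a list \<Rightarrow> bool" where
  "is_odd_cycle E c \<longleftrightarrow> is_cycle E c \<and> odd (length c)"

text \<open>The class G*: any two distinct odd cycles (distinct as subgraphs, i.e. with
different edge sets) share at most one edge.\<close>
definition in_Gstar :: "('a \<Rightarrow> 'a \<Rightarrow> bool) \<Rightarrow> bool" where
  "in_Gstar E \<longleftrightarrow> (\<forall>c1 c2. is_odd_cycle E c1 \<and> is_odd_cycle E c2
      \<and> cycle_edges c1 \<noteq> cycle_edges c2 \<longrightarrow> card (cycle_edges c1 \<inter> cycle_edges c2) \<le> 1)"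

definition connected_on :: "'a set \<Rightarrow> ('a \<Rightarrow> 'a \<Rightarrow> bool) \<Rightarrow> bool" where
  "connected_on S E \<longleftrightarrow> S \<noteq> {} \<and> (\<forall>x\<in>S. \<forall>y\<in>S. \<exists>p. is_path E p \<and> set p \<subseteq> S
      \<and> hd p = x \<and> last p = y)"

definition two_connected :: "'a set \<Rightarrow> ('a \<Rightarrow> 'a \<Rightarrow> bool) \<Rightarrow> bool" where
  "two_connected V E \<longleftrightarrow> card V \<ge> 3 \<and> connected_on V E
      \<and> (\<forall>x\<in>V. connected_on (V - {x}) E)"

definition longest_odd_cycle :: "('a \<Rightarrow> 'a \<Rightarrow> bool) \<Rightarrow> 'a list \<Rightarrow> bool" where
  "longest_odd_cycle E C \<longleftrightarrow> is_odd_cycle E C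
      \<and> (\<forall>c. is_odd_cycle E c \<longrightarrow> length c \<le> length C)"

definition touches :: "('a \<Rightarrow> 'a \<Rightarrow> bool) \<Rightarrow> 'a list \<Rightarrow> 'a \<Rightarrow> 'a \<Rightarrow> bool" where
  "touches E C v w \<longleftrightarrow> v \<notin> set C \<and> w \<in> set C \<and>
     (\<exists>p. is_path E p \<and> hd p = v \<and> last p = w \<and> set p \<inter> set C = {w})"

definition T :: "('a \<Rightarrow> 'a \<Rightarrow> bool) \<Rightarrow> 'a list \<Rightarrow> 'a \<Rightarrow> 'a set" where
  "T E C v = {w \<in> set C. touches E C v w}"

definition is_clique :: "('a \<Rightarrow> 'a \<Rightarrow> bool) \<Rightarrow> 'a set \<Rightarrow> bool" where
  "is_clique E K \<longleftrightarrow> (\<forall>x\<in>K. \<forall>y\<in>K. x \<noteq> y \<longrightarrow> E x y)"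

end

theory Submission
  imports Defs
begin

fun wk :: "('a \<Rightarrow> 'a \<Rightarrow> bool) \<Rightarrow> 'a list \<Rightarrow> bool" where
  "wk E (x#y#zs) = (E x y \<and> wk E (y#zs))"
| "wk E _ = True"

lemma wk_append:
  "wk E (xs @ ys) \<longleftrightarrow> wk E xs \<and> wk E ys \<and> (xs \<noteq> [] \<longrightarrow> ys \<noteq> [] \<longrightarrow> E (last xs) (hd ys))"
proof (induction xs)
  case Nil then show ?case by simp
next
  case (Cons x xs)
  then show ?case by (cases xs; cases ys) auto
qed

lemma walk_wk: "is_walk E p \<longleftrightarrow> p \<noteq> [] \<and> wk E p"
proof (induction p)
  case Nil then show ?case by (simp add: is_walk_def)
next
  case (Cons x p)
  show ?case
  proof (cases p)
    case Nil then show ?thesis by (simp add: is_walk_def)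
  next
    case (Cons y zs)
    have "is_walk E (x#y#zs) \<longleftrightarrow> E x y \<and> is_walk E (y#zs)"
      unfolding is_walk_def
    proof (intro iffI conjI allI impI; (elim conjE)?)
      fix i assume h: "\<forall>i. Suc i < length (x#y#zs) \<longrightarrow> E ((x#y#zs) ! i) ((x#y#zs) ! Suc i)"
      show "E x y" using h[rule_format, of 0] by simp
      fix i assume "Suc i < length (y#zs)"
      then show "E ((y#zs) ! i) ((y#zs) ! Suc i)" using h[rule_format, of "Suc i"] by simp
    next
      show "y#zs \<noteq> []" by simp
    next
      fix i assume a: "E x y" and h: "\<forall>i. Suc i < length (y#zs) \<longrightarrow> E ((y#zs) ! i) ((y#zs) ! Suc i)"
        and i: "Suc i < length (x#y#zs)"
      show "E ((x#y#zs) ! i) ((x#y#zs) ! Suc i)"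
      proof (cases i)
        case 0 then show ?thesis using a by simp
      next
        case (Suc i') then show ?thesis using h[rule_format, of i'] i by simp
      qed
    qed simp
    then show ?thesis using Cons.IH Cons by simp
  qed
qed

lemma wk_rev:
  assumes sym: "\<And>x y. E x y \<Longrightarrow> E y x"
  shows "wk E (rev p) \<longleftrightarrow> wk E p"
proof (induction p)
  case Nil then show ?case by simp
next
  case (Cons x p)
  have "wk E (rev (x#p)) \<longleftrightarrow> wk E p \<and> (p \<noteq> [] \<longrightarrow> E (hd p) x)"
    using Cons by (simp add: wk_append last_rev)
  also have "\<dots> \<longleftrightarrow> wk E (x#p)" using sym by (cases p) auto
  finally show ?case .
qed

lemma walk_to_path:
  "wk E w \<Longrightarrow> w \<noteq> [] \<Longrightarrow> \<exists>p. wk E p \<and> p \<noteq> [] \<and> distinct p \<and> hd p = hd w \<and> last p = last w \<and> set p \<subseteq> set w"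
proof (induction "length w" arbitrary: w rule: less_induct)
  case less
  show ?case
  proof (cases "distinct w")
    case True then show ?thesis using less.prems by blast
  next
    case False
    then obtain xs ys zs y where w: "w = xs@[y]@ys@[y]@zs" using not_distinct_decomp by blast
    let ?w = "xs@[y]@zs"
    have a1: "wk E (xs@[y])" using less.prems(1) unfolding w
      using wk_append[of E "xs@[y]" "ys@[y]@zs"] by simp
    have a2: "wk E ([y]@zs)" using less.prems(1) unfolding w
      using wk_append[of E "xs@[y]@ys" "[y]@zs"] by simp
    have "wk E ?w" using a1 a2 wk_append[of E "xs@[y]" zs] wk_append[of E "[y]" zs] by simp
    moreover have "length ?w < length w" using w by simp
    ultimately obtain p where "wk E p \<and> p \<noteq> [] \<and> distinct p \<and> hd p = hd ?w \<and> last p = last ?w \<and> set p \<subseteq> set ?w"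
      using less.hyps by blast
    moreover have "hd ?w = hd w" using w by (cases xs) auto
    moreover have "last ?w = last w" using w by (cases zs) auto
    moreover have "set ?w \<subseteq> set w" using w by auto
    ultimately show ?thesis by (intro exI[of _ p]) auto
  qed
qed

lemma cycle_iff:
  "is_cycle E c \<longleftrightarrow> 3 \<le> length c \<and> distinct c \<and> (\<forall>i<length c. E (c!i) (c!(Suc i mod length c)))"
proof
  assume h: "is_cycle E c"
  then have l: "3 \<le> length c" and w: "is_walk E c" and d: "distinct c" and e: "E (last c) (hd c)"
    by (auto simp: is_cycle_def is_path_def)
  have "E (c!i) (c!(Suc i mod length c))" if i: "i < length c" for i
  proof (cases "Suc i < length c")
    case True then show ?thesis using w by (simp add: is_walk_def)
  next
    case False
    then have ii: "i = length c - 1" using i by simp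
    have "Suc (length c - 1) = length c" using l by simp
    then have "Suc (length c - 1) mod length c = 0" by simp
    moreover have "c \<noteq> []" using l by auto
    ultimately show ?thesis using e l ii by (simp add: last_conv_nth hd_conv_nth)
  qed
  then show "3 \<le> length c \<and> distinct c \<and> (\<forall>i<length c. E (c!i) (c!(Suc i mod length c)))"
    using l d by blast
next
  assume h: "3 \<le> length c \<and> distinct c \<and> (\<forall>i<length c. E (c!i) (c!(Suc i mod length c)))"
  have "is_walk E c" unfolding is_walk_def
  proof (intro conjI allI impI)
    show "c \<noteq> []" using h by auto
    fix i assume i: "Suc i < length c"
    then have "E (c!i) (c!(Suc i mod length c))" using h[THEN conjunct2, THEN conjunct2, rule_format, of i] by simp
    then show "E (c!i) (c!Suc i)" using i by simp
  qed
  moreover have "E (last c) (hd c)"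
  proof -
    have l: "Suc (length c - 1) = length c" "c \<noteq> []" "length c - 1 < length c" using h by auto
    have "E (c ! (length c - 1)) (c ! (Suc (length c - 1) mod length c))"
      using h[THEN conjunct2, THEN conjunct2, rule_format, OF l(3)] .
    then show ?thesis using l by (simp add: last_conv_nth hd_conv_nth)
  qed
  ultimately show "is_cycle E c" using h by (simp add: is_cycle_def is_path_def)
qed

lemma rotate_odd_cycle:
  assumes "is_odd_cycle E C" shows "is_odd_cycle E (rotate k C)"
proof -
  let ?n = "length C"
  have c: "3 \<le> ?n" "distinct C" "\<forall>i<?n. E (C!i) (C!(Suc i mod ?n))" "odd ?n"
    using assms by (auto simp: is_odd_cycle_def cycle_iff)
  have "E (rotate k C ! i) (rotate k C ! (Suc i mod ?n))" if i: "i < ?n" for i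
  proof -
    have "rotate k C ! i = C ! ((k + i) mod ?n)" using i nth_rotate by blast
    moreover have "rotate k C ! (Suc i mod ?n) = C ! ((k + Suc i mod ?n) mod ?n)"
    proof -
      have "Suc i mod ?n < ?n" by (rule mod_less_divisor) (use c(1) in auto)
      then show ?thesis using nth_rotate by blast
    qed
    moreover have "(k + Suc i mod ?n) mod ?n = Suc ((k + i) mod ?n) mod ?n"
      by (simp add: mod_add_right_eq mod_Suc_eq)
    moreover have "(k + i) mod ?n < ?n" by (rule mod_less_divisor) (use c(1) in auto)
    ultimately show ?thesis using c(3) by simp
  qed
  then show ?thesis using c by (simp add: is_odd_cycle_def cycle_iff)
qed


lemma cycle_edges_finite: "finite (cycle_edges c)"
proof -
  have "cycle_edges c = (\<lambda>i. {c!i, c!(Suc i mod length c)}) ` {..<length c}"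
    by (auto simp: cycle_edges_def)
  then show ?thesis by simp
qed

lemma cycle_edges_sub: "e \<in> cycle_edges c \<Longrightarrow> e \<subseteq> set c"
proof -
  assume "e \<in> cycle_edges c"
  then obtain i where i: "i < length c" "e = {c!i, c!(Suc i mod length c)}"
    by (auto simp: cycle_edges_def)
  have "Suc i mod length c < length c" by (rule mod_less_divisor) (use i in auto)
  then show ?thesis using i by auto
qed

lemma cycle_edges_mem: "i < length c \<Longrightarrow> {c!i, c!(Suc i mod length c)} \<in> cycle_edges c"
  by (auto simp: cycle_edges_def)

lemma glue_contra:
  assumes G: "in_Gstar E" and D: "is_odd_cycle E D" and k: "2 \<le> k" "k + 2 \<le> length D"
    and R: "R \<noteq> []" "distinct R" "set R \<inter> set D = {}"
    and W: "wk E (D!k # R @ [D!0])" and par: "odd (k + length R + 1)"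
  shows False
proof -
  let ?n = "length D"
  let ?t = "take (k+1) D"
  define c where "c = ?t @ R"
  have Dc: "3 \<le> ?n" "distinct D" "is_walk E D"
    using D by (auto simp: is_odd_cycle_def is_cycle_def is_path_def)
  have lt: "length ?t = k + 1" using k by simp
  have t_eq: "?t = take k D @ [D!k]" using k take_Suc_conv_app_nth[of k D] by simp
  have lastt: "last ?t = D!k" using t_eq by simp
  have "D \<noteq> []" using k by auto
  then have hdt: "hd ?t = D!0" using k by (simp add: hd_conv_nth)
  have wD: "wk E D" using Dc walk_wk by blast
  have wt: "wk E ?t" using wD wk_append[of E ?t "drop (k+1) D"] by simp
  have W': "wk E R" "E (D!k) (hd R)" "E (last R) (D!0)"
    using W R(1) wk_append[of E "[D!k]" "R @ [D!0]"] wk_append[of E R "[D!0]"] by auto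
  have wc: "wk E c" unfolding c_def using wt W' lastt by (simp add: wk_append)
  have lc: "length c = k + 1 + length R" unfolding c_def using lt by simp
  have dc: "distinct c" unfolding c_def using R Dc(2) set_take_subset[of "k+1" D] by auto
  have "hd c = hd ?t" unfolding c_def by (rule hd_append2) (use lt in auto)
  then have hdc: "hd c = D!0" using hdt by simp
  have lastc: "last c = last R" unfolding c_def using R by simp
  have cyc: "is_odd_cycle E c"
    unfolding is_odd_cycle_def is_cycle_def is_path_def
    using wc dc lc par hdc lastc W' k walk_wk[of E c] by auto
  have n4: "4 \<le> ?n" using k by simp
  have ne: "D \<noteq> []" "c \<noteq> []" using n4 R unfolding c_def by auto
  have c4: "4 \<le> length c" using lc k R by (cases R) auto
  have c0: "c!0 = D!0" "c!1 = D!1" "c!2 = D!2" unfolding c_def using lt k by (auto simp: nth_append)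
  define e0 where "e0 = {D!0, D!1}"
  define e1 where "e1 = {D!1, D!2}"
  have "e0 \<in> cycle_edges D" using cycle_edges_mem[of 0 D] n4 ne unfolding e0_def by simp
  moreover have "e1 \<in> cycle_edges D" using cycle_edges_mem[of 1 D] n4 ne unfolding e1_def by (simp add: numeral_2_eq_2)
  moreover have "e0 \<in> cycle_edges c" using cycle_edges_mem[of 0 c] c4 c0 ne unfolding e0_def by simp
  moreover have "e1 \<in> cycle_edges c" using cycle_edges_mem[of 1 c] c4 c0 ne unfolding e1_def by (simp add: numeral_2_eq_2)
  ultimately have sub: "{e0, e1} \<subseteq> cycle_edges c \<inter> cycle_edges D" by auto
  have "D!0 \<noteq> D!2" using nth_eq_iff_index_eq[OF Dc(2), of 0 2] n4 ne by simp
  moreover have "D!0 \<noteq> D!1" using nth_eq_iff_index_eq[OF Dc(2), of 0 1] n4 ne by simp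
  ultimately have "e0 \<noteq> e1" unfolding e0_def e1_def by (auto simp: doubleton_eq_iff)
  then have "card {e0, e1} = 2" by simp
  moreover have "card {e0, e1} \<le> card (cycle_edges c \<inter> cycle_edges D)"
    using sub cycle_edges_finite by (intro card_mono) auto
  ultimately have card2: "2 \<le> card (cycle_edges c \<inter> cycle_edges D)" by simp
  have lastin: "last R \<notin> set D" using R last_in_set[OF R(1)] by blast
  have "Suc (length c - 1) = length c" using c4 by simp
  then have "Suc (length c - 1) mod length c = 0" by simp
  then have "{last R, D!0} \<in> cycle_edges c"
    using cycle_edges_mem[of "length c - 1" c] c4 c0(1) lastc ne(2)
    by (simp add: last_conv_nth)
  moreover have "{last R, D!0} \<notin> cycle_edges D" using cycle_edges_sub lastin by blast
  ultimately have "cycle_edges c \<noteq> cycle_edges D" by blast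
  then have "card (cycle_edges c \<inter> cycle_edges D) \<le> 1"
    using G cyc D unfolding in_Gstar_def by blast
  then show False using card2 by simp
qed


lemma touch_pair:
  assumes sym: "\<And>x y. E x y \<Longrightarrow> E y x" and G: "in_Gstar E" and C: "is_odd_cycle E C"
    and ij: "i < j" "j < length C"
    and t1: "touches E C v (C!i)" and t2: "touches E C v (C!j)"
  shows "E (C!i) (C!j)"
proof (rule ccontr)
  assume nE: "\<not> E (C!i) (C!j)"
  let ?n = "length C"
  have Cc: "3 \<le> ?n" "distinct C" "\<forall>i<?n. E (C!i) (C!(Suc i mod ?n))" "odd ?n"
    using C by (auto simp: is_odd_cycle_def cycle_iff)
  have Cne: "C \<noteq> []" using ij by auto
  obtain p1 where p1: "is_path E p1" "hd p1 = v" "last p1 = C!i" "set p1 \<inter> set C = {C!i}"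
    and vC: "v \<notin> set C" using t1 unfolding touches_def by blast
  obtain p2 where p2: "is_path E p2" "hd p2 = v" "last p2 = C!j" "set p2 \<inter> set C = {C!j}"
    using t2 unfolding touches_def by blast
  have wp1: "p1 \<noteq> []" "wk E p1" using p1(1) walk_wk[of E p1] by (auto simp: is_path_def)
  have wp2: "p2 \<noteq> []" "wk E p2" using p2(1) walk_wk[of E p2] by (auto simp: is_path_def)
  have p1e: "p1 = v # tl p1" using wp1 p1(2) by (cases p1) auto
  have tl1: "tl p1 \<noteq> []"
  proof
    assume "tl p1 = []"
    then have "p1 = [v]" using p1e by simp
    then show False using p1(3) vC nth_mem[of i C] ij by simp
  qed
  obtain a t where at: "p1 = v # a # t" using tl1 p1e by (cases "tl p1") auto
  have wtl: "wk E (tl p1)" "E v (hd (tl p1))" using wp1(2) at by auto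
  define w where "w = rev (tl p1) @ p2"
  have ww: "wk E w" unfolding w_def using wtl wk_rev[of E, OF sym] tl1 wp2 p2(2) sym
    by (simp add: wk_append last_rev)
  have "last (tl p1) = C!i" using p1(3) at by simp
  then have hw: "hd w = C!i" unfolding w_def using tl1 by (simp add: hd_append hd_rev)
  have lw: "last w = C!j" unfolding w_def using wp2 p2(3) by simp
  have sw: "set w \<subseteq> set p1 \<union> set p2" unfolding w_def using at by auto
  obtain q where q: "wk E q" "q \<noteq> []" "distinct q" "hd q = C!i" "last q = C!j" "set q \<subseteq> set w"
  proof -
    have "w \<noteq> []" unfolding w_def using wp2 by simp
    then show ?thesis using walk_to_path[OF ww] that hw lw by metis
  qed
  have neq: "C!i \<noteq> C!j" using nth_eq_iff_index_eq[OF Cc(2), of i j] ij by simp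
  have lq: "3 \<le> length q"
  proof (rule ccontr)
    assume "\<not> 3 \<le> length q"
    then have "q = [hd q] \<or> q = [hd q, last q]" using q(2)
      by (cases q; cases "tl q"; auto simp flip: length_0_conv)
    then consider "q = [hd q]" | "q = [hd q, last q]" by blast
    then show False
    proof cases
      case 1 then show ?thesis using q neq by (metis last.simps)
    next
      case 2 then have "E (hd q) (last q)" using q(1) by (metis wk.simps(1))
      then show ?thesis using q nE by simp
    qed
  qed
  define R where "R = butlast (tl q)"
  have qR: "q = C!i # R @ [C!j]"
  proof -
    have "q = hd q # tl q" using q(2) by simp
    moreover have "tl q \<noteq> []" using lq by (cases q) auto
    then have "tl q = butlast (tl q) @ [last (tl q)]" by simp
    moreover have "last (tl q) = last q" using lq by (cases q) auto
    ultimately show ?thesis unfolding R_def using q(4,5) by simp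
  qed
  have Rne: "R \<noteq> []" using lq qR by (cases R) auto
  have dq: "distinct (C!i # R @ [C!j])" using q(3) qR by simp
  then have Rd: "distinct R" and Rij: "C!i \<notin> set R" "C!j \<notin> set R" by auto
  have RC: "set R \<inter> set C = {}"
  proof -
    have "set R \<subseteq> set p1 \<union> set p2" using q(6) sw qR by auto
    show ?thesis
    proof (rule ccontr)
      assume "set R \<inter> set C \<noteq> {}"
      then obtain z where z: "z \<in> set R" "z \<in> set C" by blast
      then have "z \<in> set p1 \<or> z \<in> set p2" using \<open>set R \<subseteq> set p1 \<union> set p2\<close> by blast
      then have "z = C!i \<or> z = C!j" using z p1(4) p2(4) by blast
      then show False using z Rij by blast
    qed
  qed
  define k1 where "k1 = j - i"
  define k2 where "k2 = ?n - j + i"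
  have k1: "2 \<le> k1"
  proof (rule ccontr)
    assume "\<not> 2 \<le> k1"
    then have "j = Suc i" using ij unfolding k1_def by simp
    then show False using Cc(3)[rule_format, of i] ij nE by simp
  qed
  have k2: "2 \<le> k2"
  proof (rule ccontr)
    assume "\<not> 2 \<le> k2"
    then have "i = 0" "j = ?n - 1" using ij unfolding k2_def by auto
    moreover have "Suc (?n - 1) = ?n" using Cc(1) by simp
    then have "Suc (?n - 1) mod ?n = 0" by simp
    moreover have "?n - 1 < ?n" using Cc(1) by simp
    ultimately have "E (C!j) (C!i)" using Cc(3)[rule_format, of "?n - 1"] by simp
    then show False using sym nE by blast
  qed
  have k12: "k1 + k2 = ?n" unfolding k1_def k2_def using ij by simp
  consider "odd (k1 + length R + 1)" | "odd (k2 + length R + 1)"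
  proof -
    have "odd (k1 + length R + 1) \<or> odd (k2 + length R + 1)" using Cc(4) k12 by presburger
    then show ?thesis using that by blast
  qed
  then show False
  proof cases
    case 1
    let ?D = "rotate i C"
    have D: "is_odd_cycle E ?D" using rotate_odd_cycle[OF C] .
    have lD: "length ?D = ?n" by simp
    have D0: "?D ! 0 = C!i" using nth_rotate[of 0 C i] ij Cne by simp
    have Dk: "?D ! k1 = C!j" using nth_rotate[of k1 C i] ij k1 k2 unfolding k1_def k2_def by simp
    have W: "wk E (?D!k1 # rev R @ [?D!0])"
      using wk_rev[of E "C!i # R @ [C!j]", OF sym] q(1) qR D0 Dk by simp
    show False
      by (rule glue_contra[OF G D, of k1 "rev R"]) (use k1 k2 k12 Rne Rd RC W 1 in auto)
  next
    case 2
    let ?D = "rotate j C"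
    have D: "is_odd_cycle E ?D" using rotate_odd_cycle[OF C] .
    have D0: "?D ! 0 = C!j" using nth_rotate[of 0 C j] ij Cne by simp
    have "j + k2 = ?n + i" unfolding k2_def using ij by simp
    then have "(j + k2) mod ?n = i" using ij by simp
    then have Dk: "?D ! k2 = C!i" using nth_rotate[of k2 C j] k1 k12 by simp
    have W: "wk E (?D!k2 # R @ [?D!0])" using q(1) qR D0 Dk by simp
    show False
      by (rule glue_contra[OF G D, of k2 R]) (use k1 k2 k12 Rne Rd RC W 2 in auto)
  qed
qed

theorem mainTheorem5:
  fixes V :: "'a set" and E :: "'a \<Rightarrow> 'a \<Rightarrow> bool" and C :: "'a list" and v :: 'a
  assumes "simple_graph V E"
    and "in_Gstar E"
    and "two_connected V E"
    and "longest_odd_cycle E C"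
    and "length C \<ge> 5"
    and "V - set C \<noteq> {}"
    and "v \<in> V - set C"
  shows "is_clique E (T E C v)"
  unfolding is_clique_def
proof (intro ballI impI)
  have sym: "\<And>x y. E x y \<Longrightarrow> E y x" using assms(1) by (auto simp: simple_graph_def)
  have C: "is_odd_cycle E C" using assms(4) by (simp add: longest_odd_cycle_def)
  fix x y assume x: "x \<in> T E C v" and y: "y \<in> T E C v" and xy: "x \<noteq> y"
  obtain i where i: "i < length C" "x = C!i" using x by (auto simp: T_def in_set_conv_nth)
  obtain j where j: "j < length C" "y = C!j" using y by (auto simp: T_def in_set_conv_nth)
  have tx: "touches E C v x" and ty: "touches E C v y" using x y by (auto simp: T_def)
  have "i \<noteq> j" using i j xy by auto
  then consider "i < j" | "j < i" by linarith
  then show "E x y"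
  proof cases
    case 1 then show ?thesis using touch_pair[OF sym assms(2) C 1 j(1)] tx ty i j by simp
  next
    case 2 then show ?thesis using touch_pair[OF sym assms(2) C 2 i(1)] tx ty i j sym by simp
  qed
qed

end
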